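(* Let $d_{\mathrm{in}}, d_{\mathrm{out}} \ge 1$, let $\mathbf{U}^{(t)} \in \mathbb{R}^{d_{\mathrm{out}}\times d_{\mathrm{in}}}$ be a fixed matrix (the task vector of task $t$ for a given module), and let $(\mathbf{x}, \mathbf{g}_{\mathbf{y}})$ be a random pair with $\mathbf{x}\in\mathbb{R}^{d_{\mathrm{in}}}$ and $\mathbf{g}_{\mathbf{y}}\in\mathbb{R}^{d_{\mathrm{out}}}$ whose moments below exist. Define the per-sample descent matrix $\mathbf{D}^{(t)} = \mathbf{g}_{\mathbf{y}}\mathbf{x}^{\top}$. Suppose the following three conditions (Assumption 1) hold: (1) $\mathbb{E}[\mathbf{D}^{(t)}] = \rho\,\mathbf{U}^{(t)}$ for some weight decay coefficient $\rho>0$; (2) with $\overline{\mathbf{D}}^{(t)} = \mathbb{E}[\mathbf{D}^{(t)}]$, $\mathbf{C}_t = \mathbb{E}\big[(\mathbf{D}^{(t)}-\overline{\mathbf{D}}^{(t)})^{\top}(\mathbf{D}^{(t)}-\overline{\mathbf{D}}^{(t)})\big]$ and $\mathbf{M}_t = (\overline{\mathbf{D}}^{(t)})^{\top}\overline{\mathbf{D}}^{(t)}$, one has $\cos_F(\mathbf{C}_t,\mathbf{M}_t) > \alpha_t$ for some constant $\alpha_t\in(0,1]$; (3) $\mathbb{E}\big[\|\mathbf{g}_{\mathbf{y}}\|_2^2\,\mathbf{x}\mathbf{x}^{\top}\big] = \mathbb{E}\big[\|\mathbf{g}_{\mathbf{y}}\|_2^2\big]\,\mathbb{E}[\mathbf{x}\mathbf{x}^{\top}]$.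 Then $$\cos_F\!\left(\mathbb{E}[\mathbf{x}\mathbf{x}^{\top}],\ (\mathbf{U}^{(t)})^{\top}\mathbf{U}^{(t)}\right) > \alpha_t .$$
   Context: For matrices $\mathbf{A},\mathbf{B}$ of the same shape, the Frobenius cosine similarity is $\cos_F(\mathbf{A},\mathbf{B}) = \operatorname{Tr}(\mathbf{A}^{\top}\mathbf{B})/(\|\mathbf{A}\|_F\|\mathbf{B}\|_F)$. Interpretation: $\mathbf{U}^{(t)} = \mathbf{W}^{(t)}-\mathbf{W}_{\mathrm{pre}}$ is the difference between fine-tuned and pretrained weights of a linear module, $\mathbf{x}$ is an input activation to the module, $\mathbf{y}=\mathbf{U}^{(t)}\mathbf{x}$ is the residual output, and $\mathbf{g}_{\mathbf{y}} = -\nabla_{\mathbf{y}}\ell$ is the backpropagated negative gradient of the fine-tuning loss $\ell$; the SGD update with $L_2$ regularization is $\delta(\mathbf{U}^{(t)}) = \eta(\mathbf{D}^{(t)} - \rho\mathbf{U}^{(t)})$, so condition (1) is equivalent to $\mathbb{E}[\delta(\mathbf{U}^{(t)})]=\mathbf{0}$. All expectations are with respect to the randomness of mini-batch sampling, conditioned on the fine-tuned checkpoint. *)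

theory Defs
  imports "HOL-Probability.Probability"
begin

definition frob_norm :: "real^'n^'m \<Rightarrow> real" where
  "frob_norm A = sqrt (\<Sum>i\<in>UNIV. \<Sum>j\<in>UNIV. (A $ i $ j)^2)"

definition cos_F :: "real^'n^'m \<Rightarrow> real^'n^'m \<Rightarrow> real" where
  "cos_F A B = trace (transpose A ** B) / (frob_norm A * frob_norm B)"

definition outer :: "real^'m \<Rightarrow> real^'n \<Rightarrow> real^'n^'m" where
  "outer a b = (\<chi> i j. a $ i * b $ j)"

end

theory Submission
  imports Defs
begin

lemma trace_inner: "trace (transpose A ** B) = inner A (B :: real^'n^'m)"
proof -
  have "trace (transpose A ** B) = (\<Sum>i\<in>UNIV. \<Sum>k\<in>UNIV. A $ k $ i * B $ k $ i)"
    unfolding trace_def matrix_matrix_mult_def transpose_def by simp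
  also have "\<dots> = (\<Sum>k\<in>UNIV. \<Sum>i\<in>UNIV. A $ k $ i * B $ k $ i)" by (rule sum.swap)
  also have "\<dots> = inner A B" unfolding inner_vec_def by (simp add: inner_real_def)
  finally show ?thesis .
qed
lemma frob_norm_eq: "frob_norm (A :: real^'n^'m) = norm A"
  unfolding frob_norm_def norm_eq_sqrt_inner inner_vec_def
  by (simp add: inner_real_def power2_eq_square)

lemma cos_F_eq: "cos_F A (B :: real^'n^'m) = inner A B / (norm A * norm B)"
  unfolding cos_F_def trace_inner frob_norm_eq ..

lemma key:
  fixes v P :: "'a::real_inner"
  assumes c: "c \<ge> 0" and a: "\<alpha> > 0"
    and h: "inner (v - c *\<^sub>R P) P / (norm (v - c *\<^sub>R P) * norm P) > \<alpha>"
  shows "inner v P / (norm v * norm P) > \<alpha>"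
proof -
  define b where "b = inner v P"
  define p where "p = inner P P"
  define n where "n = inner v v"
  define w where "w = v - c *\<^sub>R P"
  have num: "inner w P = b - c * p" unfolding w_def b_def p_def by (simp add: inner_diff_left)
  have ww: "inner w w = n - 2*c*b + c^2 * p" unfolding w_def b_def p_def n_def
    by (simp add: inner_diff_left inner_diff_right inner_commute power2_eq_square algebra_simps)
  have pos: "norm w * norm P > 0"
  proof (rule ccontr)
    assume "\<not> ?thesis"
    then have "norm w * norm P = 0" by (simp add: less_le)
    with h a show False unfolding w_def by simp
  qed
  then have nP: "norm P > 0" and nw: "norm w > 0"
    by (metis mult_pos_pos norm_ge_zero zero_less_mult_pos2 less_le zero_less_mult_pos mult_zero_left mult_zero_right)+
  have h1: "inner w P > \<alpha> * (norm w * norm P)"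
    using h pos unfolding w_def by (simp add: pos_less_divide_eq)
  then have bc: "b - c*p > 0" using num a pos by (metis mult_pos_pos order.strict_trans)
  have "(inner w P)^2 > (\<alpha> * (norm w * norm P))^2"
    using h1 a pos by (intro power_strict_mono) auto
  then have h2: "(b - c*p)^2 > \<alpha>^2 * (inner w w * p)"
    by (simp add: num power_mult_distrib power2_norm_eq_inner p_def)
  define q where "q = n*p - b^2"
  have q0: "q \<ge> 0" unfolding q_def n_def p_def b_def
    using Cauchy_Schwarz_ineq[of v P] by (simp add: mult.commute)
  have "inner w w * p = q + (b - c*p)^2" unfolding ww q_def by (simp add: power2_eq_square algebra_simps)
  then have "\<alpha>^2 * (inner w w * p) = \<alpha>^2 * q + \<alpha>^2 * (b - c*p)^2" by (simp add: distrib_left)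
  with h2 have h3: "(1 - \<alpha>^2) * (b - c*p)^2 > \<alpha>^2 * q" by (simp add: left_diff_distrib)
  have a1: "1 - \<alpha>^2 > 0"
  proof (rule ccontr)
    assume "\<not> ?thesis"
    then have "(1 - \<alpha>^2) * (b - c*p)^2 \<le> 0" by (simp add: mult_nonpos_nonneg)
    moreover have "\<alpha>^2 * q \<ge> 0" using q0 by simp
    ultimately show False using h3 by linarith
  qed
  have p0: "p \<ge> 0" unfolding p_def by simp
  have bb: "b \<ge> b - c*p" using c p0 by (simp add: mult_nonneg_nonneg)
  have "(b - c*p)^2 \<le> b^2" using bb bc by (intro power_mono) auto
  then have "(1 - \<alpha>^2) * (b - c*p)^2 \<le> (1 - \<alpha>^2) * b^2" using a1 by (simp add: mult_left_mono)
  with h3 have "(1 - \<alpha>^2) * b^2 > \<alpha>^2 * q" by linarith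
  then have h4: "b^2 > \<alpha>^2 * (n*p)" unfolding q_def by (simp add: algebra_simps)
  have "n * p = (norm v * norm P)^2" unfolding n_def p_def by (simp add: power_mult_distrib power2_norm_eq_inner)
  with h4 have "b^2 > (\<alpha> * (norm v * norm P))^2" by (simp add: power_mult_distrib)
  moreover have "0 \<le> b" using bc bb by linarith
  ultimately have h5: "b > \<alpha> * (norm v * norm P)" by (rule power2_less_imp_less)
  have "norm v * norm P > 0"
  proof (rule ccontr)
    assume "\<not> ?thesis"
    then have "norm v = 0 \<or> norm P = 0" by (simp add: less_le)
    then have "b = 0" unfolding b_def by auto
    with bc bb show False by linarith
  qed
  with h5 show ?thesis unfolding b_def by (simp add: pos_less_divide_eq)
qed


lemma tdiff: "transpose (A - B) ** (A - B) =
   transpose A ** A - transpose A ** B - transpose B ** A + transpose B ** (B :: real^'n^'m)"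
  by (simp add: vec_eq_iff matrix_matrix_mult_def transpose_def sum_subtractf sum.distrib[symmetric]
      algebra_simps)

lemma lin1: "bounded_linear (\<lambda>A. transpose A ** (B :: real^'n^'m))"
  apply (rule linear_conv_bounded_linear[THEN iffD1])
  apply (rule linearI)
  by (simp_all add: vec_eq_iff matrix_matrix_mult_def transpose_def sum.distrib[symmetric]
      sum_distrib_left algebra_simps)

lemma lin2: "bounded_linear (\<lambda>A. transpose B ** (A :: real^'n^'m))"
  apply (rule linear_conv_bounded_linear[THEN iffD1])
  apply (rule linearI)
  by (simp_all add: vec_eq_iff matrix_matrix_mult_def transpose_def sum.distrib[symmetric]
      sum_distrib_left algebra_simps)

lemma outer_sq: "transpose (outer g y) ** outer g y = (norm g)\<^sup>2 *\<^sub>R outer y (y :: real^'n)"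
proof -
  have "(\<Sum>k\<in>UNIV. g $ k * y $ i * (g $ k * y $ j)) = (\<Sum>k\<in>UNIV. g $ k * g $ k) * (y $ i * y $ j)" for i j
    unfolding sum_distrib_right by (simp add: mult_ac)
  then show ?thesis
    by (simp add: vec_eq_iff matrix_matrix_mult_def transpose_def outer_def power2_norm_eq_inner
      inner_vec_def inner_real_def)
qed

lemma scale_sq: "transpose (r *\<^sub>R U) ** (r *\<^sub>R U) = r^2 *\<^sub>R (transpose U ** (U :: real^'n^'m))"
  by (simp add: vec_eq_iff matrix_matrix_mult_def transpose_def sum_distrib_left power2_eq_square mult_ac)

theorem theorem1:
  fixes M :: "'s measure"
    and x :: "'s \<Rightarrow> real^'din"
    and gy :: "'s \<Rightarrow> real^'dout"
    and U :: "real^'din^'dout"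
    and \<rho> \<alpha> :: real
  defines "D \<equiv> (\<lambda>\<omega>. outer (gy \<omega>) (x \<omega>))"
  defines "Dbar \<equiv> prob_space.expectation M D"
  defines "C \<equiv> prob_space.expectation M (\<lambda>\<omega>. transpose (D \<omega> - Dbar) ** (D \<omega> - Dbar))"
  defines "Mt \<equiv> transpose Dbar ** Dbar"
  defines "Sxx \<equiv> prob_space.expectation M (\<lambda>\<omega>. outer (x \<omega>) (x \<omega>))"
  assumes "prob_space M"
    and "integrable M D"
    and "integrable M (\<lambda>\<omega>. transpose (D \<omega> - Dbar) ** (D \<omega> - Dbar))"
    and "integrable M (\<lambda>\<omega>. outer (x \<omega>) (x \<omega>))"
    and "integrable M (\<lambda>\<omega>. (norm (gy \<omega>))\<^sup>2)"
    and "integrable M (\<lambda>\<omega>. (norm (gy \<omega>))\<^sup>2 *\<^sub>R outer (x \<omega>) (x \<omega>))"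
    and "\<rho> > 0"
    and "Dbar = \<rho> *\<^sub>R U"
    and "0 < \<alpha>" and "\<alpha> \<le> 1"
    and "cos_F C Mt > \<alpha>"
    and "prob_space.expectation M (\<lambda>\<omega>. (norm (gy \<omega>))\<^sup>2 *\<^sub>R outer (x \<omega>) (x \<omega>))
         = prob_space.expectation M (\<lambda>\<omega>. (norm (gy \<omega>))\<^sup>2) *\<^sub>R Sxx"
  shows "cos_F Sxx (transpose U ** U) > \<alpha>"
proof -
  interpret prob_space M by fact
  define P where "P = transpose U ** U"
  define s where "s = expectation (\<lambda>\<omega>. (norm (gy \<omega>))\<^sup>2)"
  note intD = assms(7) and intN = assms(11)
  have pt: "transpose (D \<omega> - Dbar) ** (D \<omega> - Dbar) =
     (((norm (gy \<omega>))\<^sup>2 *\<^sub>R outer (x \<omega>) (x \<omega>) - transpose (D \<omega>) ** Dbar)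
        - transpose Dbar ** D \<omega>) + Mt" for \<omega>
    unfolding tdiff Mt_def by (simp add: D_def outer_sq)
  have i1: "integrable M (\<lambda>\<omega>. transpose (D \<omega>) ** Dbar)"
    using integrable_bounded_linear[OF lin1 intD] .
  have i2: "integrable M (\<lambda>\<omega>. transpose Dbar ** D \<omega>)"
    using integrable_bounded_linear[OF lin2 intD] .
  have e1: "expectation (\<lambda>\<omega>. transpose (D \<omega>) ** Dbar) = Mt"
    using integral_bounded_linear[OF lin1[of Dbar] intD] by (simp add: Mt_def Dbar_def[symmetric])
  have e2: "expectation (\<lambda>\<omega>. transpose Dbar ** D \<omega>) = Mt"
    using integral_bounded_linear[OF lin2[of Dbar] intD] by (simp add: Mt_def Dbar_def[symmetric])
  have "C = expectation (\<lambda>\<omega>. (((norm (gy \<omega>))\<^sup>2 *\<^sub>R outer (x \<omega>) (x \<omega>) - transpose (D \<omega>) ** Dbar)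
        - transpose Dbar ** D \<omega>) + Mt)"
    unfolding C_def pt ..
  also have "\<dots> = s *\<^sub>R Sxx - Mt"
    using intN i1 i2 e1 e2 assms(17) by (simp add: s_def prob_space)
  finally have C1: "C = s *\<^sub>R Sxx - Mt" .
  have Mteq: "Mt = \<rho>^2 *\<^sub>R P" unfolding Mt_def assms(13) scale_sq P_def ..
  have Ceq: "C = s *\<^sub>R Sxx - \<rho>^2 *\<^sub>R P" using C1 Mteq by simp
  have rp: "\<rho>^2 > 0" using assms(12) by simp
  have nMt: "norm Mt = \<rho>^2 * norm P" using rp unfolding Mteq by simp
  have iMt: "inner C Mt = \<rho>^2 * inner C P" unfolding Mteq by simp
  have "inner C Mt / (norm C * norm Mt) = inner C P / (norm C * norm P)"
    unfolding nMt iMt using rp by simp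
  then have "inner C P / (norm C * norm P) > \<alpha>"
    using assms(16) unfolding cos_F_eq by simp
  then have h: "inner (s *\<^sub>R Sxx - \<rho>^2 *\<^sub>R P) P / (norm (s *\<^sub>R Sxx - \<rho>^2 *\<^sub>R P) * norm P) > \<alpha>"
    unfolding Ceq .
  have k: "inner (s *\<^sub>R Sxx) P / (norm (s *\<^sub>R Sxx) * norm P) > \<alpha>"
    using key[OF _ assms(14) h] rp by simp
  have s0: "s \<ge> 0" unfolding s_def by (rule integral_nonneg_AE) simp
  have "s \<noteq> 0"
  proof
    assume "s = 0"
    with k assms(14) show False by simp
  qed
  with s0 have sp: "s > 0" by simp
  have "inner (s *\<^sub>R Sxx) P / (norm (s *\<^sub>R Sxx) * norm P) = inner Sxx P / (norm Sxx * norm P)"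
    using sp by simp
  with k show ?thesis unfolding cos_F_eq P_def by simp
qed

end
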